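(* Let $f=\frac1{1-X}\in GF(2)[[X]]$, $\mu[f]:g\mapsto fg$, and let $\Gamma$ be the group of bijections of $GF(2)[[X]]$ generated by the maps $g\mapsto f\cdot(s+g)$, $s\in\{0,1\}$. Then the cyclic subgroup $\langle\mu[f]\rangle$ is not a normal subgroup of $\Gamma$.
   Context: Under the identification of $\{0,1\}^\omega$ with $GF(2)[[X]]$ via $(a_k)\mapsto\sum a_kX^k$, $\Gamma$ is the automaton group $\Gamma(\mathcal{M}_2)$ of the two-state Mealy machine over $\{0,1\}$ in which state $s$, reading $r$, outputs $s+r\bmod 2$ and moves to state $s+r\bmod 2$. *)

theory Defs
  imports "HOL-Library.Z2" "HOL-Computational_Algebra.Formal_Power_Series"
    "HOL-Algebra.Bij" "HOL-Algebra.Coset" "HOL-Algebra.Generated_Groups"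
begin

definition f2 :: "bit fps" where
  "f2 = inverse (1 - fps_X)"

definition mu :: "bit fps \<Rightarrow> bit fps \<Rightarrow> bit fps" where
  "mu f = (\<lambda>g. f * g)"

definition gen_map :: "bit \<Rightarrow> bit fps \<Rightarrow> bit fps" where
  "gen_map s = (\<lambda>g. f2 * (fps_const s + g))"

abbreviation SymGF2 :: "(bit fps \<Rightarrow> bit fps) monoid" where
  "SymGF2 \<equiv> BijGroup (UNIV :: bit fps set)"

definition Gamma :: "(bit fps \<Rightarrow> bit fps) set" where
  "Gamma = generate SymGF2 (range gen_map)"

end

theory Submission
  imports Defs
begin

lemma f2_mult: "f2 * (1 - fps_X) = 1"
  unfolding f2_def by (rule inverse_mult_eq_1) simp

lemma gen_map_Bij: "gen_map s \<in> Bij UNIV"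
proof -
  have "bij (gen_map s)"
  proof (rule bij_betw_byWitness[where f'="\<lambda>h. (1 - fps_X) * h - fps_const s"])
    show "\<forall>a\<in>UNIV. (1 - fps_X) * gen_map s a - fps_const s = a"
      by (auto simp: gen_map_def mult.assoc[symmetric] f2_mult mult.commute[of "1 - fps_X"])
    show "\<forall>a'\<in>UNIV. gen_map s ((1 - fps_X) * a' - fps_const s) = a'"
      by (auto simp: gen_map_def mult.assoc[symmetric] f2_mult)
  qed auto
  thus ?thesis by (simp add: Bij_def)
qed

lemma mult_Bij: "a \<in> Bij UNIV \<Longrightarrow> b \<in> Bij UNIV \<Longrightarrow> a \<otimes>\<^bsub>SymGF2\<^esub> b = (\<lambda>x. a (b x))"
  by (simp add: BijGroup_def compose_def restrict_UNIV)

lemma mu_eq: "mu f2 = gen_map 0"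
  by (simp add: mu_def gen_map_def fun_eq_iff)

lemma Gamma_sub: "Gamma \<subseteq> Bij UNIV"
  unfolding Gamma_def
  using group.generate_incl[OF group_BijGroup, of "range gen_map" UNIV] gen_map_Bij
  by (auto simp: BijGroup_def)

lemma H_sub: "generate SymGF2 {mu f2} \<subseteq> Bij UNIV"
  using group.generate_incl[OF group_BijGroup, of "{mu f2}" UNIV] gen_map_Bij mu_eq
  by (auto simp: BijGroup_def)

lemma H_fix0: "k \<in> generate SymGF2 {mu f2} \<Longrightarrow> k 0 = 0"
proof (induction rule: generate.induct)
  case one then show ?case by (simp add: BijGroup_def)
next
  case (incl h) then show ?case by (simp add: mu_def)
next
  case (inv h)
  then have hb: "h \<in> Bij UNIV" using gen_map_Bij mu_eq by simp
  then have "bij h" by (simp add: Bij_def)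
  have "h 0 = 0" using inv by (simp add: mu_def)
  then have "inv_into UNIV h 0 = 0"
    using \<open>bij h\<close> by (metis bij_is_inj inv_f_f)
  then show ?case using inv_BijGroup[OF hb] by simp
next
  case (eng h1 h2)
  have "h1 \<in> Bij UNIV" "h2 \<in> Bij UNIV" using H_sub eng.hyps by blast+
  then have "h1 \<otimes>\<^bsub>SymGF2\<^esub> h2 = (\<lambda>x. h1 (h2 x))"
    by (rule mult_Bij)
  then show ?case using eng.IH by simp
qed

lemma f2_ne: "f2 * (1 + f2) \<noteq> 0"
proof
  assume a: "f2 * (1 + f2) = 0"
  have "f2 \<noteq> 0" using f2_mult by (metis mult_zero_left zero_neq_one)
  then have "1 + f2 = 0" using a by (metis mult_eq_0_iff)
  then have "f2 = - 1" using eq_neg_iff_add_eq_0 add.commute by metis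
  then have "- (1 - fps_X) = (1::bit fps)" using f2_mult by (metis mult_minus_left mult_1_left)
  then have "fps_nth (- (1 - fps_X)) 1 = fps_nth (1::bit fps) 1" by simp
  then show False by (simp only: fps_neg_nth fps_sub_nth fps_X_nth fps_one_nth) simp
qed
theorem proposition9p6:
  shows "\<not> (generate SymGF2 {mu f2} \<lhd> SymGF2\<lparr>carrier := Gamma\<rparr>)"
proof
  let ?G = "SymGF2\<lparr>carrier := Gamma\<rparr>"
  let ?H = "generate SymGF2 {mu f2}"
  let ?x = "gen_map 1"
  assume N: "?H \<lhd> ?G"
  have gG: "group ?G" using N by (rule normal.axioms(2))
  have xG: "?x \<in> Gamma" unfolding Gamma_def by (rule generate.incl) auto
  have hH: "mu f2 \<in> ?H" by (rule generate.incl) simp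
  have sub: "?H \<subseteq> Gamma" using normal_imp_subgroup[OF N] subgroup.subset by fastforce
  have hG: "mu f2 \<in> Gamma" using hH sub by blast
  define k where "k = ?x \<otimes>\<^bsub>?G\<^esub> mu f2 \<otimes>\<^bsub>?G\<^esub> inv\<^bsub>?G\<^esub> ?x"
  have kH: "k \<in> ?H" unfolding k_def using normal.inv_op_closed2[OF N] xG hH by simp
  have kG: "k \<in> Gamma" using kH sub by blast
  have xc: "?x \<in> carrier ?G" and hc: "mu f2 \<in> carrier ?G" using xG hG by simp_all
  have "k \<otimes>\<^bsub>?G\<^esub> ?x = ?x \<otimes>\<^bsub>?G\<^esub> mu f2"
  proof -
    interpret group ?G by (rule gG)
    show ?thesis unfolding k_def using xc hc by (metis m_assoc l_inv r_one m_closed inv_closed)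
  qed
  then have eq: "k \<otimes>\<^bsub>SymGF2\<^esub> ?x = ?x \<otimes>\<^bsub>SymGF2\<^esub> mu f2" by simp
  have kB: "k \<in> Bij UNIV" and xB: "?x \<in> Bij UNIV" and hB: "mu f2 \<in> Bij UNIV"
    using kG xG hG Gamma_sub by blast+
  have "(\<lambda>y. k (?x y)) = (\<lambda>y. ?x (mu f2 y))"
    using eq mult_Bij[OF kB xB] mult_Bij[OF xB hB] by simp
  then have "k (?x 1) = ?x (mu f2 1)" by metis
  moreover have "?x 1 = 0"
  proof -
    have "(1::bit fps) + 1 = 0" by (rule fps_ext) (simp only: fps_add_nth fps_one_nth fps_zero_nth, simp)
    then show ?thesis by (simp add: gen_map_def)
  qed
  moreover have "k 0 = 0" using H_fix0[OF kH] .
  ultimately have "?x (mu f2 1) = 0" by simp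
  then have "f2 * (1 + f2) = 0" by (simp add: gen_map_def mu_def)
  then show False using f2_ne by simp
qed
end
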